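(* Consider a connected one-dimensional network of elastoplastic springs as in the context with $\mathrm{rank}(R^\top D)=q$, $q=n-2$, and no spring blocked by the displacement-controlled loadings (so $\dim U=1$). Let $\bar u$ be a fixed nonzero vector of $U$ and define $\bar c^+,\bar c^-\in\mathbb{R}^m$ by $\bar c^+_i=c_i^{\operatorname{sign}(\bar u_i)}$, $\bar c^-_i=c_i^{-\operatorname{sign}(\bar u_i)}$, where $c_i^{-1}:=c_i^-$ and $c_i^{+1}:=c_i^+$. Then for each fixed $t\ge0$, the safe load condition $(C+Ah(t))\cap U^\perp\neq\emptyset$ holds if and only if $$\langle\bar u,\bar c^++Ah(t)\rangle\cdot\langle\bar u,\bar c^-+Ah(t)\rangle\le0.$$
   Context: Spring $k$ joins left node $i_k$ to right node $j_k$; the graph is connected; $D$ is $m\times n$ with $(D\xi)_k=\xi_{j_k}-\xi_{i_k}$. $A=\mathrm{diag}(a_k)$, $a_k>0$; $c_k^-<c_k^+$; $C=\prod_k[c_k^-,c_k^+]$. Displacement-controlled loadings $\xi_{J_k}-\xi_{I_k}=l_k(t)$, incidence vectors $R^k$ with $(R^k)^\top D\xi=\xi_{J_k}-\xi_{I_k}$, $R=(R^1,\dots,R^q)$. Spring $i$ is blocked if the pairs $\{I_k,J_k\}$ contain a chain connecting its two endpoints. $U=\{x\in D\mathbb{R}^n:R^\top x=0\}$, $U^\perp$ its Euclidean orthogonal complement, $V=A^{-1}U^\perp$, $P_U$ the projection onto $U$ along $V$; $h(t)=P_UA^{-1}\bar h(t)$ with nodal forces $f(t)=-D^\top\bar h(t)$.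 *)

theory Defs
  imports "HOL-Analysis.Analysis"
begin

text \<open>Nodes are indexed by a finite type 'n, springs by a finite type 'm.
  Spring k joins left node ii k to right node jj k.
  The q displacement-controlled loadings are indexed by k < q (nat), so that q = 0 is allowed.\<close>

definition incidence_matrix :: "('m \<Rightarrow> 'n) \<Rightarrow> ('m \<Rightarrow> 'n) \<Rightarrow> real^'n^'m" where
  "incidence_matrix ii jj = (\<chi> k l. (if l = jj k then 1 else 0) - (if l = ii k then 1 else 0))"

definition diag_matrix :: "real^'m \<Rightarrow> real^'m^'m" where
  "diag_matrix a = (\<chi> i j. if i = j then a $ i else 0)"

definition graph_connected :: "('m \<Rightarrow> 'n) \<Rightarrow> ('m \<Rightarrow> 'n) \<Rightarrow> bool" where
  "graph_connected ii jj \<longleftrightarrow>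
     (\<forall>a b. (a, b) \<in> ({(ii k, jj k) | k. True} \<union> {(jj k, ii k) | k. True})\<^sup>*)"

definition spring_blocked ::
  "('m \<Rightarrow> 'n) \<Rightarrow> ('m \<Rightarrow> 'n) \<Rightarrow> nat \<Rightarrow> (nat \<Rightarrow> 'n) \<Rightarrow> (nat \<Rightarrow> 'n) \<Rightarrow> 'm \<Rightarrow> bool" where
  "spring_blocked ii jj q I J e \<longleftrightarrow>
     (ii e, jj e) \<in> ({(I k, J k) | k. k < q} \<union> {(J k, I k) | k. k < q})\<^sup>*"

text \<open>rank(R^T D): the dimension of the row space of the q x n matrix R^T D,
  whose k-th row is D^T R^k.\<close>
definition rank_RtD :: "real^'n^'m \<Rightarrow> nat \<Rightarrow> (nat \<Rightarrow> real^'m) \<Rightarrow> nat" where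
  "rank_RtD D q R = dim {transpose D *v R k | k. k < q}"

definition subspace_U :: "real^'n^'m \<Rightarrow> nat \<Rightarrow> (nat \<Rightarrow> real^'m) \<Rightarrow> (real^'m) set" where
  "subspace_U D q R = {x. x \<in> range (\<lambda>\<xi>. D *v \<xi>) \<and> (\<forall>k<q. R k \<bullet> x = 0)}"

definition proj_along :: "'a::real_vector set \<Rightarrow> 'a set \<Rightarrow> 'a \<Rightarrow> 'a" where
  "proj_along U V x = (THE u. u \<in> U \<and> x - u \<in> V)"

text \<open>c_i^{s} for s = sign: c_i^{-1} = c_i^-, c_i^{+1} = c_i^+.  (For s = 0, which only
  occurs where the weighting component of u-bar vanishes, we choose c_i^+; the choice is irrelevant.)\<close>
definition c_sign :: "real^'m \<Rightarrow> real^'m \<Rightarrow> real \<Rightarrow> 'm \<Rightarrow> real" where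
  "c_sign cm cp s i = (if s = -1 then cm $ i else cp $ i)"

end

theory Submission
  imports Defs
begin

lemma D_apply: "(incidence_matrix ii jj *v x) $ k = x $ jj k - x $ ii k"
proof -
  have "(incidence_matrix ii jj *v x) $ k = (\<Sum>l\<in>UNIV. (if l = jj k then x $ l else 0)) - (\<Sum>l\<in>UNIV. (if l = ii k then x $ l else 0))"
  proof -
    have eq: "\<And>l. ((if l = jj k then 1 else 0) - (if l = ii k then 1 else 0)) * x$l = (if l = jj k then x$l else 0) - (if l = ii k then x$l else 0)"
      by simp
    show ?thesis
      unfolding matrix_vector_mult_def incidence_matrix_def vec_lambda_beta eq sum_subtractf ..
  qed
  then show ?thesis by (simp add: if_distrib[of "\<lambda>a. a * _"] cong: if_cong)
qed

lemma D_const: "incidence_matrix ii jj *v (\<chi> i. 1) = 0"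
  by (simp add: vec_eq_iff D_apply)

lemma U_line:
  fixes D :: "real^'n::finite^'m::finite" and Rv :: "nat \<Rightarrow> real^'m" and ubar u :: "real^'m" and q :: nat
  assumes D_def: "D = incidence_matrix ii jj"
    and U_def: "U = subspace_U D q Rv"
    and qdef: "int q = int CARD('n) - 2"
    and rank: "rank_RtD D q Rv = q"
    and ubarU: "ubar \<in> U" and ubar_nz: "ubar \<noteq> 0"
    and uU: "u \<in> U"
  shows "\<exists>k. u = k *\<^sub>R ubar"
proof -
  define W where "W = {transpose D *v Rv k | k. k < q}"
  define S where "S = {\<xi>. \<forall>k<q. Rv k \<bullet> (D *v \<xi>) = 0}"
  have inn: "Rv k \<bullet> (D *v \<xi>) = (transpose D *v Rv k) \<bullet> \<xi>" for k \<xi>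
    by (simp add: dot_lmul_matrix)
  have S_eq: "S = {y. \<forall>x\<in>span W. orthogonal x y}"
  proof (intro set_eqI iffI)
    fix y assume "y \<in> S"
    then have "\<And>x. x \<in> W \<Longrightarrow> orthogonal y x"
      by (auto simp: S_def W_def inn orthogonal_def inner_commute)
    then show "y \<in> {y. \<forall>x\<in>span W. orthogonal x y}"
      using orthogonal_to_span orthogonal_commute by blast
  next
    fix y assume "y \<in> {y. \<forall>x\<in>span W. orthogonal x y}"
    then have "\<forall>x\<in>W. orthogonal x y" using span_superset by blast
    then show "y \<in> S" by (auto simp: S_def W_def inn orthogonal_def)
  qed
  have "dim {y \<in> UNIV. \<forall>x\<in>span W. orthogonal x y} + dim (span W) = dim (UNIV :: (real^'n) set)"
    by (rule dim_subspace_orthogonal_to_vectors) auto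
  moreover have "dim W = q" using rank unfolding rank_RtD_def W_def .
  ultimately have dimS: "dim S = 2"
    using qdef by (simp add: S_eq)
  define one :: "real^'n" where "one = (\<chi> i. 1)"
  have D1: "D *v (k *\<^sub>R one) = 0" for k
    by (simp add: D_def one_def D_const matrix_vector_mult_scaleR)
  obtain \<xi>0 where x0: "ubar = D *v \<xi>0" "\<xi>0 \<in> S"
    using ubarU by (auto simp: U_def subspace_U_def S_def)
  obtain \<xi> where x1: "u = D *v \<xi>" "\<xi> \<in> S"
    using uU by (auto simp: U_def subspace_U_def S_def)
  have oneS: "one \<in> S" using D1[of 1] by (simp add: S_def)
  have one_nz: "one \<noteq> 0" by (simp add: one_def vec_eq_iff)
  have nsp: "\<xi>0 \<notin> span {one}"
  proof
    assume "\<xi>0 \<in> span {one}"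
    then obtain k where "\<xi>0 = k *\<^sub>R one" by (auto simp: span_singleton)
    then show False using x0 D1 ubar_nz by simp
  qed
  have ne: "\<xi>0 \<noteq> one" using nsp span_base by blast
  have ind: "independent {\<xi>0, one}"
    using nsp one_nz by (simp add: independent_insert)
  have "S \<subseteq> span {\<xi>0, one}"
    using card_eq_dim[of "{\<xi>0, one}" S] ind ne dimS x0 oneS by simp
  then have "\<xi> \<in> span {\<xi>0, one}" using x1 by blast
  then obtain a b where "\<xi> - a *\<^sub>R \<xi>0 = b *\<^sub>R one"
    by (auto simp: span_insert span_singleton)
  then have "\<xi> = a *\<^sub>R \<xi>0 + b *\<^sub>R one" by (simp add: algebra_simps)
  then have "u = a *\<^sub>R ubar" using x1 x0 D1 by (simp add: matrix_vector_right_distrib matrix_vector_mult_scaleR)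
  then show ?thesis by blast
qed

lemma comp_bound:
  fixes u c lo hi :: real
  assumes "lo \<le> c" "c \<le> hi"
  shows "u * (if - sgn u = -1 then lo else hi) \<le> u * c \<and> u * c \<le> u * (if sgn u = -1 then lo else hi)"
proof (cases "u > 0")
  case True then show ?thesis using assms by (simp add: mult_left_mono)
next
  case False
  show ?thesis
  proof (cases "u = 0")
    case True then show ?thesis by simp
  next
    case False
    then have "u < 0" using \<open>\<not> u > 0\<close> by simp
    then show ?thesis using assms by (simp add: mult_left_mono_neg)
  qed
qed

lemma conv_bound:
  fixes x y lo hi th :: real
  assumes "lo \<le> x" "x \<le> hi" "lo \<le> y" "y \<le> hi" "0 \<le> th" "th \<le> 1"
  shows "lo \<le> x + th * (y - x) \<and> x + th * (y - x) \<le> hi"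
proof -
  have e: "x + th * (y - x) = (1 - th) * x + th * y" by (simp add: algebra_simps)
  have "(1 - th) * lo + th * lo \<le> (1 - th) * x + th * y"
    using assms by (intro add_mono mult_left_mono) auto
  moreover have "(1 - th) * x + th * y \<le> (1 - th) * hi + th * hi"
    using assms by (intro add_mono mult_left_mono) auto
  ultimately show ?thesis unfolding e by (simp add: algebra_simps)
qed

theorem proposition2:
  fixes ii jj :: "'m::finite \<Rightarrow> 'n::finite"
    and a cm cp :: "real^'m"
    and q :: nat
    and I J :: "nat \<Rightarrow> 'n"
    and R :: "nat \<Rightarrow> real^'m"
    and hbar :: "real \<Rightarrow> real^'m"
    and ubar :: "real^'m"
    and t :: real
    and D :: "real^'n^'m" and A :: "real^'m^'m" and C U V :: "(real^'m) set"
    and h :: "real \<Rightarrow> real^'m" and cbp cbm :: "real^'m"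
  assumes D_def: "D = incidence_matrix ii jj"
    and A_def: "A = diag_matrix a"
    and C_def: "C = {c :: real^'m. \<forall>i. cm $ i \<le> c $ i \<and> c $ i \<le> cp $ i}"
    and U_def: "U = subspace_U D q R"
    and V_def: "V = {matrix_inv A *v y | y. y \<in> orthogonal_comp U}"
    and h_def: "h = (\<lambda>s. proj_along U V (matrix_inv A *v hbar s))"
    and cbp_def: "cbp = (\<chi> i. c_sign cm cp (sgn (ubar $ i)) i)"
    and cbm_def: "cbm = (\<chi> i. c_sign cm cp (- sgn (ubar $ i)) i)"
    and conn: "graph_connected ii jj"
    and apos: "\<forall>i. a $ i > 0"
    and cless: "\<forall>i. cm $ i < cp $ i"
    and incid: "\<forall>k<q. \<forall>\<xi>. R k \<bullet> (D *v \<xi>) = \<xi> $ J k - \<xi> $ I k"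
    and qdef: "int q = int CARD('n) - 2"
    and rank: "rank_RtD D q R = q"
    and unblocked: "\<forall>e. \<not> spring_blocked ii jj q I J e"
    and ubarU: "ubar \<in> U" and ubar_nz: "ubar \<noteq> 0"
    and t: "t \<ge> 0"
  shows "((\<lambda>c. c + A *v h t) ` C) \<inter> orthogonal_comp U \<noteq> {}
     \<longleftrightarrow> (ubar \<bullet> (cbp + A *v h t)) * (ubar \<bullet> (cbm + A *v h t)) \<le> 0"
proof -
  have line: "\<And>u. u \<in> U \<Longrightarrow> \<exists>k. u = k *\<^sub>R ubar"
    using U_line[OF D_def U_def qdef rank ubarU ubar_nz] by blast
  have oc: "orthogonal_comp U = {x. ubar \<bullet> x = 0}"
  proof (intro set_eqI iffI)
    fix x assume "x \<in> orthogonal_comp U"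
    then show "x \<in> {x. ubar \<bullet> x = 0}" using ubarU by (auto simp: orthogonal_comp_def orthogonal_def)
  next
    fix x assume x: "x \<in> {x. ubar \<bullet> x = 0}"
    show "x \<in> orthogonal_comp U"
      unfolding orthogonal_comp_def orthogonal_def
    proof (intro CollectI ballI)
      fix y assume "y \<in> U"
      then obtain k where "y = k *\<^sub>R ubar" using line by blast
      then show "y \<bullet> x = 0" using x by simp
    qed
  qed
  define w where "w = A *v h t"
  define L where "L = ubar \<bullet> (cbm + w)"
  define M where "M = ubar \<bullet> (cbp + w)"
  have cbmC: "cbm \<in> C" and cbpC: "cbp \<in> C"
    using cless by (auto simp: C_def cbm_def cbp_def c_sign_def less_imp_le)
  have bnd: "L \<le> ubar \<bullet> (c + w) \<and> ubar \<bullet> (c + w) \<le> M" if "c \<in> C" for c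
  proof -
    have ci: "cm $ i \<le> c $ i \<and> c $ i \<le> cp $ i" for i using that by (auto simp: C_def)
    have "ubar \<bullet> cbm \<le> ubar \<bullet> c"
      unfolding inner_vec_def inner_real_def
    proof (intro sum_mono)
      fix i
      show "ubar $ i * cbm $ i \<le> ubar $ i * c $ i" using comp_bound[of "cm $ i" "c $ i" "cp $ i" "ubar $ i"] ci[of i]
        by (simp add: cbm_def c_sign_def)
    qed
    moreover have "ubar \<bullet> c \<le> ubar \<bullet> cbp"
      unfolding inner_vec_def inner_real_def
    proof (intro sum_mono)
      fix i
      show "ubar $ i * c $ i \<le> ubar $ i * cbp $ i" using comp_bound[of "cm $ i" "c $ i" "cp $ i" "ubar $ i"] ci[of i]
        by (simp add: cbp_def c_sign_def)
    qed
    ultimately show ?thesis by (simp add: L_def M_def inner_add_right)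
  qed
  have LM: "L \<le> M" using bnd[OF cbmC] by (simp add: L_def)
  have "((\<lambda>c. c + A *v h t) ` C) \<inter> orthogonal_comp U \<noteq> {} \<longleftrightarrow> (\<exists>c\<in>C. ubar \<bullet> (c + w) = 0)"
    unfolding oc w_def by auto
  also have "\<dots> \<longleftrightarrow> L * M \<le> 0"
  proof
    assume "\<exists>c\<in>C. ubar \<bullet> (c + w) = 0"
    then obtain c where "c \<in> C" "ubar \<bullet> (c + w) = 0" by blast
    then have "L \<le> 0" "0 \<le> M" using bnd by force+
    then show "L * M \<le> 0" by (simp add: mult_nonpos_nonneg)
  next
    assume p: "L * M \<le> 0"
    have L0: "L \<le> 0"
    proof (rule ccontr)
      assume "\<not> L \<le> 0" then have "L > 0" "M > 0" using LM by auto
      then have "L * M > 0" by simp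
      then show False using p by simp
    qed
    have M0: "0 \<le> M"
    proof (rule ccontr)
      assume "\<not> 0 \<le> M" then have "L < 0" "M < 0" using LM by auto
      then have "L * M > 0" by (simp add: mult_neg_neg)
      then show False using p by simp
    qed
    show "\<exists>c\<in>C. ubar \<bullet> (c + w) = 0"
    proof (cases "L = M")
      case True
      then have "L = 0" using L0 M0 by simp
      then show ?thesis using cbmC by (auto simp: L_def)
    next
      case False
      define th where "th = - L / (M - L)"
      have th0: "0 \<le> th" and th1: "th \<le> 1" using L0 M0 LM False
        by (auto simp: th_def divide_simps)
      define c where "c = cbm + th *\<^sub>R (cbp - cbm)"
      have "ubar \<bullet> (c + w) = L + th * (M - L)"
        by (simp add: c_def L_def M_def inner_add_right inner_diff_right algebra_simps)
      also have "\<dots> = 0" using False by (simp add: th_def)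
      finally have z: "ubar \<bullet> (c + w) = 0" .
      have "c \<in> C"
        unfolding C_def c_def
      proof (intro CollectI allI)
        fix i
        have "cm $ i \<le> cbm $ i \<and> cbm $ i \<le> cp $ i" "cm $ i \<le> cbp $ i \<and> cbp $ i \<le> cp $ i"
          using cbmC cbpC by (auto simp: C_def)
        then have "cm $ i \<le> cbm $ i + th * (cbp $ i - cbm $ i) \<and> cbm $ i + th * (cbp $ i - cbm $ i) \<le> cp $ i"
          using conv_bound[OF _ _ _ _ th0 th1] by blast
        then show "cm $ i \<le> (cbm + th *\<^sub>R (cbp - cbm)) $ i \<and> (cbm + th *\<^sub>R (cbp - cbm)) $ i \<le> cp $ i"
          by simp
      qed
      then show ?thesis using z by blast
    qed
  qed
  finally show ?thesis by (simp add: L_def M_def w_def mult.commute)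
qed

end
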